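(* Under the same setting, let $\hat N_A$ be the global dual basis functions defined there. Then for every function $u=\sum_{B=1}^n P_B N_B$ in the spline space spanned by $\{N_A\}$, the coefficients are recovered as $P_A=\int_\Omega \hat N_A\,u\,d\Omega$ for all $A$. Equivalently, the operator $\Pi u=\sum_A\big(\int_\Omega\hat N_A u\,d\Omega\big)N_A$, defined for $u\in L^2(\Omega)$, is a linear projection onto the spline space (it reproduces every spline).
   Context: Setting: $\Omega\subset\mathbb{R}^d$ is partitioned into elements $\Omega^e$ of positive measure; $\{N_A\}_{A=1}^n$ is a nonnegative spline basis with $\int_\Omega N_A>0$; on each element, with local-to-global index map $a\mapsto A(e,a)$ listing the basis functions not identically zero there, $\mathbf{N}^e=\mathbf{C}^e\mathbf{B}^e$ for linearly independent Bernstein functions $\mathbf{B}^e$ and invertible extraction matrix $\mathbf{C}^e$; $\mathbf{R}^e=(\mathbf{C}^e)^{-1}$; $G^e_{ij}=\int_{\Omega^e}B^e_iB^e_j$; $\omega^e_a=\int_{\Omega^e}N_{A(e,a)}/\int_\Omega N_{A(e,a)}$; $\hat{\mathbf{N}}^e=\operatorname{diag}(\boldsymbol{\omega}^e)(\mathbf{R}^e)^T(\mathbf{G}^e)^{-1}\mathbf{B}^e$; and $\hat N_A|_{\Omega^e}=\hat N^e_a$ if $A=A(e,a)$, $0$ otherwise. *)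

theory Defs
  imports "HOL-Analysis.Analysis"
begin

text \<open>Square matrices of size m are represented as functions nat \<Rightarrow> nat \<Rightarrow> real,
  only the entries with indices below m being relevant.\<close>

definition is_inverse_mat :: "nat \<Rightarrow> (nat \<Rightarrow> nat \<Rightarrow> real) \<Rightarrow> (nat \<Rightarrow> nat \<Rightarrow> real) \<Rightarrow> bool" where
  "is_inverse_mat m M R \<longleftrightarrow>
     (\<forall>i<m. \<forall>j<m. (\<Sum>k<m. M i k * R k j) = (if i = j then 1 else 0)
                 \<and> (\<Sum>k<m. R i k * M k j) = (if i = j then 1 else 0))"

definition invertible_mat_n :: "nat \<Rightarrow> (nat \<Rightarrow> nat \<Rightarrow> real) \<Rightarrow> bool" where
  "invertible_mat_n m M \<longleftrightarrow> (\<exists>R. is_inverse_mat m M R)"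

definition inv_mat_n :: "nat \<Rightarrow> (nat \<Rightarrow> nat \<Rightarrow> real) \<Rightarrow> (nat \<Rightarrow> nat \<Rightarrow> real)" where
  "inv_mat_n m M = (SOME R. is_inverse_mat m M R)"

definition gram :: "'a::euclidean_space set \<Rightarrow> (nat \<Rightarrow> 'a \<Rightarrow> real) \<Rightarrow> nat \<Rightarrow> nat \<Rightarrow> real" where
  "gram S B i j = (LINT x:S|lebesgue. B i x * B j x)"

definition dual_weight :: "(nat \<Rightarrow> 'a::euclidean_space \<Rightarrow> real) \<Rightarrow> 'a set \<Rightarrow> 'a set \<Rightarrow> nat \<Rightarrow> real" where
  "dual_weight N \<Omega> S A = (LINT x:S|lebesgue. N A x) / (LINT x:\<Omega>|lebesgue. N A x)"

text \<open>Local dual basis: hat N^e = diag(omega^e) (R^e)^T (G^e)^{-1} B^e, R^e = (C^e)^{-1}.\<close>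
definition dual_local :: "nat \<Rightarrow> (nat \<Rightarrow> nat \<Rightarrow> real) \<Rightarrow> (nat \<Rightarrow> 'a::euclidean_space \<Rightarrow> real)
    \<Rightarrow> 'a set \<Rightarrow> (nat \<Rightarrow> real) \<Rightarrow> nat \<Rightarrow> 'a \<Rightarrow> real" where
  "dual_local m Ce Be S w a x =
     w a * (\<Sum>i<m. \<Sum>j<m. inv_mat_n m Ce i a * inv_mat_n m (gram S Be) i j * Be j x)"

text \<open>On the (null) overlaps of elements the element with least index is used;
  outside Omega the function is 0.\<close>
definition dual_basis :: "nat \<Rightarrow> (nat \<Rightarrow> 'a::euclidean_space set) \<Rightarrow> (nat \<Rightarrow> nat) \<Rightarrow> (nat \<Rightarrow> nat \<Rightarrow> nat)
    \<Rightarrow> (nat \<Rightarrow> nat \<Rightarrow> 'a \<Rightarrow> real) \<Rightarrow> (nat \<Rightarrow> nat \<Rightarrow> nat \<Rightarrow> real) \<Rightarrow> (nat \<Rightarrow> 'a \<Rightarrow> real) \<Rightarrow> 'a set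
    \<Rightarrow> nat \<Rightarrow> 'a \<Rightarrow> real" where
  "dual_basis ne Om nloc loc Bern C N \<Omega> A x =
     (if \<exists>e<ne. x \<in> Om e then
        (let e = (LEAST e. e < ne \<and> x \<in> Om e) in
          if \<exists>a<nloc e. loc e a = A then
            dual_local (nloc e) (C e) (Bern e) (Om e)
              (\<lambda>a. dual_weight N \<Omega> (Om e) (loc e a))
              (THE a. a < nloc e \<and> loc e a = A) x
          else 0)
      else 0)"

definition dual_proj :: "nat \<Rightarrow> (nat \<Rightarrow> 'a::euclidean_space \<Rightarrow> real) \<Rightarrow> (nat \<Rightarrow> 'a \<Rightarrow> real) \<Rightarrow> 'a set
    \<Rightarrow> ('a \<Rightarrow> real) \<Rightarrow> 'a \<Rightarrow> real" where
  "dual_proj n Nhat N \<Omega> u x = (\<Sum>A<n. (LINT y:\<Omega>|lebesgue. Nhat A y * u y) * N A x)"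

end

theory Submission
  imports Defs "Jordan_Normal_Form.Determinant"
begin

lemma set_bm_cong:
  fixes f g :: "'b \<Rightarrow> real"
  assumes "set_borel_measurable M S f" "\<And>x. x \<in> S \<Longrightarrow> f x = g x"
  shows "set_borel_measurable M S g"
proof -
  have "(\<lambda>x. indicator S x *\<^sub>R g x) = (\<lambda>x. indicator S x *\<^sub>R f x)"
    using assms(2) by (auto simp: fun_eq_iff indicator_def)
  thus ?thesis using assms(1) unfolding set_borel_measurable_def by simp
qed

lemma set_int_cong:
  fixes f g :: "'b \<Rightarrow> real"
  assumes "set_integrable M S f" "\<And>x. x \<in> S \<Longrightarrow> f x = g x"
  shows "set_integrable M S g"
proof -
  have "(\<lambda>x. indicator S x *\<^sub>R g x) = (\<lambda>x. indicator S x *\<^sub>R f x)"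
    using assms(2) by (auto simp: fun_eq_iff indicator_def)
  thus ?thesis using assms(1) unfolding set_integrable_def by simp
qed

lemma set_integrable_imp_bm:
  "set_integrable M S f \<Longrightarrow> set_borel_measurable M S f"
  unfolding set_integrable_def set_borel_measurable_def by auto

lemma set_integrable_sum':
  fixes f :: "'i \<Rightarrow> 'b \<Rightarrow> real"
  assumes "\<And>i. i \<in> I \<Longrightarrow> set_integrable M S (f i)"
  shows "set_integrable M S (\<lambda>x. \<Sum>i\<in>I. f i x)"
proof -
  have "integrable M (\<lambda>x. \<Sum>i\<in>I. indicator S x *\<^sub>R f i x)"
    using assms unfolding set_integrable_def by (intro Bochner_Integration.integrable_sum) auto
  thus ?thesis unfolding set_integrable_def by (simp add: sum_distrib_left)
qed

lemma set_integral_sum':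
  fixes f :: "'i \<Rightarrow> 'b \<Rightarrow> real"
  assumes "\<And>i. i \<in> I \<Longrightarrow> set_integrable M S (f i)"
  shows "(LINT x:S|M. (\<Sum>i\<in>I. f i x)) = (\<Sum>i\<in>I. LINT x:S|M. f i x)"
proof -
  have "(LINT x:S|M. (\<Sum>i\<in>I. f i x)) = integral\<^sup>L M (\<lambda>x. \<Sum>i\<in>I. indicator S x *\<^sub>R f i x)"
    unfolding set_lebesgue_integral_def by (simp add: sum_distrib_left)
  also have "\<dots> = (\<Sum>i\<in>I. integral\<^sup>L M (\<lambda>x. indicator S x *\<^sub>R f i x))"
    using assms unfolding set_integrable_def by (intro Bochner_Integration.integral_sum) auto
  finally show ?thesis unfolding set_lebesgue_integral_def .
qed

lemma set_integrable_L2_mult: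
  fixes f g :: "'b \<Rightarrow> real"
  assumes fm: "set_borel_measurable M S f" and gm: "set_borel_measurable M S g"
    and f2: "set_integrable M S (\<lambda>x. (f x)\<^sup>2)" and g2: "set_integrable M S (\<lambda>x. (g x)\<^sup>2)"
  shows "set_integrable M S (\<lambda>x. f x * g x)"
proof (rule set_integrable_bound[OF set_integral_add(1)[OF f2 g2]])
  have "(\<lambda>x. indicator S x *\<^sub>R (f x * g x)) = (\<lambda>x. (indicator S x *\<^sub>R f x) * (indicator S x *\<^sub>R g x))"
    by (auto simp: fun_eq_iff indicator_def)
  thus "set_borel_measurable M S (\<lambda>x. f x * g x)"
    using fm gm unfolding set_borel_measurable_def by simp
  show "AE x in M. x \<in> S \<longrightarrow> norm (f x * g x) \<le> norm ((f x)\<^sup>2 + (g x)\<^sup>2)"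
  proof (intro AE_I2 impI)
    fix x
    have "0 \<le> (\<bar>f x\<bar> - \<bar>g x\<bar>)\<^sup>2" by simp
    hence "2 * \<bar>f x\<bar> * \<bar>g x\<bar> \<le> (f x)\<^sup>2 + (g x)\<^sup>2"
      by (simp add: power2_eq_square algebra_simps)
    moreover have "0 \<le> \<bar>f x\<bar> * \<bar>g x\<bar>" by simp
    moreover have "norm ((f x)\<^sup>2 + (g x)\<^sup>2) = (f x)\<^sup>2 + (g x)\<^sup>2" by simp
    moreover have "norm (f x * g x) = \<bar>f x\<bar> * \<bar>g x\<bar>" by (simp add: abs_mult)
    ultimately show "norm (f x * g x) \<le> norm ((f x)\<^sup>2 + (g x)\<^sup>2)"
      by linarith
  qed
qed



locale dsetting =
  fixes \<Omega> :: "'a::euclidean_space set"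
    and n :: nat
    and N :: "nat \<Rightarrow> 'a \<Rightarrow> real"
    and ne :: nat
    and Om :: "nat \<Rightarrow> 'a set"
    and nloc :: "nat \<Rightarrow> nat"
    and loc :: "nat \<Rightarrow> nat \<Rightarrow> nat"
    and Bern :: "nat \<Rightarrow> nat \<Rightarrow> 'a \<Rightarrow> real"
    and C :: "nat \<Rightarrow> nat \<Rightarrow> nat \<Rightarrow> real"
  assumes partition: "\<Omega> = (\<Union>e<ne. Om e)"
    and elem_meas: "\<And>e. e < ne \<Longrightarrow> Om e \<in> sets lebesgue"
    and elem_disj: "\<And>e e'. e < ne \<Longrightarrow> e' < ne \<Longrightarrow> e \<noteq> e' \<Longrightarrow> Om e \<inter> Om e' \<in> null_sets lebesgue"
    and N_int: "\<And>A. A < n \<Longrightarrow> set_integrable lebesgue \<Omega> (N A)"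
    and N_int_pos: "\<And>A. A < n \<Longrightarrow> (LINT x:\<Omega>|lebesgue. N A x) > 0"
    and loc_inj: "\<And>e. e < ne \<Longrightarrow> inj_on (loc e) {..<nloc e}"
    and loc_active: "\<And>e. e < ne \<Longrightarrow> loc e ` {..<nloc e} = {A. A < n \<and> (\<exists>x\<in>Om e. N A x \<noteq> 0)}"
    and Bern_meas: "\<And>e i. e < ne \<Longrightarrow> i < nloc e \<Longrightarrow> set_borel_measurable lebesgue (Om e) (Bern e i)"
    and Bern_L2: "\<And>e i. e < ne \<Longrightarrow> i < nloc e \<Longrightarrow> set_integrable lebesgue (Om e) (\<lambda>x. (Bern e i x)\<^sup>2)"
    and Bern_indep: "\<And>e c. e < ne \<Longrightarrow>
        (AE x in lebesgue. x \<in> Om e \<longrightarrow> (\<Sum>i<nloc e. c i * Bern e i x) = 0) \<Longrightarrow> (\<forall>i<nloc e. c i = 0)"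
    and C_inv: "\<And>e. e < ne \<Longrightarrow> invertible_mat_n (nloc e) (C e)"
    and extraction: "\<And>e a x. e < ne \<Longrightarrow> a < nloc e \<Longrightarrow> x \<in> Om e \<Longrightarrow>
        N (loc e a) x = (\<Sum>i<nloc e. C e a i * Bern e i x)"
begin

definition D :: "nat \<Rightarrow> 'a set" where "D e = Om e - (\<Union>e'<e. Om e')"

definition g :: "nat \<Rightarrow> nat \<Rightarrow> 'a \<Rightarrow> real" where
  "g A e x = (if \<exists>a<nloc e. loc e a = A then
            dual_local (nloc e) (C e) (Bern e) (Om e)
              (\<lambda>a. dual_weight N \<Omega> (Om e) (loc e a))
              (THE a. a < nloc e \<and> loc e a = A) x
          else 0)"

abbreviation "db \<equiv> dual_basis ne Om nloc loc Bern C N \<Omega>"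

lemma D_sub: "D e \<subseteq> Om e" unfolding D_def by auto

lemma D_meas: "e < ne \<Longrightarrow> D e \<in> sets lebesgue"
  unfolding D_def using elem_meas by (intro sets.Diff sets.finite_UN) auto

lemma Om_sub: "e < ne \<Longrightarrow> Om e \<subseteq> \<Omega>" using partition by auto

lemma Omega_meas: "\<Omega> \<in> sets lebesgue"
  unfolding partition using elem_meas by (intro sets.finite_UN) auto

lemma least_D:
  assumes "e < ne" "x \<in> D e"
  shows "(LEAST e. e < ne \<and> x \<in> Om e) = e"
proof (rule Least_equality)
  show "e < ne \<and> x \<in> Om e" using assms D_sub by auto
  fix y assume "y < ne \<and> x \<in> Om y"
  thus "e \<le> y" using assms unfolding D_def by (auto simp: not_le)
qed

lemma db_D:
  assumes "e < ne" "x \<in> D e"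
  shows "db A x = g A e x"
proof -
  have "\<exists>e<ne. x \<in> Om e" using assms D_sub by auto
  thus ?thesis unfolding dual_basis_def g_def Let_def least_D[OF assms] by simp
qed

lemma ind_sum: "indicator \<Omega> x = (\<Sum>e<ne. indicator (D e) x :: real)"
proof (cases "\<exists>e<ne. x \<in> Om e")
  case False
  hence "x \<notin> \<Omega>" "\<And>e. e < ne \<Longrightarrow> x \<notin> D e" using partition D_sub by auto
  thus ?thesis by simp
next
  case True
  define e0 where "e0 = (LEAST e. e < ne \<and> x \<in> Om e)"
  have e0: "e0 < ne \<and> x \<in> Om e0" unfolding e0_def by (rule LeastI_ex) (use True in auto)
  have min: "\<And>e. e < ne \<Longrightarrow> x \<in> Om e \<Longrightarrow> e0 \<le> e" unfolding e0_def by (rule Least_le) auto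
  have nm: "x \<notin> Om e'" if "e' < e0" for e' using min[of e'] that e0 by fastforce
  have xD: "x \<in> D e0" unfolding D_def using e0 nm by auto
  have "(\<Sum>e<ne. indicator (D e) x :: real) = (\<Sum>e<ne. if e = e0 then 1 else 0)"
  proof (rule sum.cong)
    fix e assume "e \<in> {..<ne}"
    hence e: "e < ne" by simp
    show "indicator (D e) x = (if e = e0 then 1 else (0::real))"
    proof (cases "x \<in> D e")
      case True
      have "e0 = e" using least_D[OF e True] unfolding e0_def .
      thus ?thesis using True by simp
    next
      case False
      hence "e \<noteq> e0" using xD by metis
      thus ?thesis using False by simp
    qed
  qed simp
  also have "\<dots> = 1" using e0 by simp
  finally have s1: "(\<Sum>e<ne. indicator (D e) x :: real) = 1" .
  have "x \<in> \<Omega>" using e0 Om_sub by blast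
  thus ?thesis using s1 by simp
qed

lemma Om_minus_D_null: "e < ne \<Longrightarrow> Om e - D e \<in> null_sets lebesgue"
proof -
  assume e: "e < ne"
  have "Om e - D e = (\<Union>e'<e. Om e \<inter> Om e')" unfolding D_def by auto
  also have "\<dots> \<in> null_sets lebesgue"
    using e elem_disj by (intro null_sets.finite_UN) auto
  finally show ?thesis .
qed

lemma int_D_Om:
  fixes h :: "'a \<Rightarrow> real"
  assumes e: "e < ne" and h: "set_integrable lebesgue (Om e) h"
  shows "(LINT x:D e|lebesgue. h x) = (LINT x:Om e|lebesgue. h x)"
proof (rule set_integral_cong_set[of lebesgue "Om e" h "D e"])
  show "set_borel_measurable lebesgue (Om e) h" using h by (rule set_integrable_imp_bm)
  show "set_borel_measurable lebesgue (D e) h"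
    using set_integrable_subset[OF h D_meas[OF e] D_sub] by (rule set_integrable_imp_bm)
  show "AE x in lebesgue. (x \<in> Om e) = (x \<in> D e)"
  proof (rule AE_mp[OF AE_not_in[OF Om_minus_D_null[OF e]]], rule AE_I2)
    fix x show "x \<notin> Om e - D e \<longrightarrow> (x \<in> Om e) = (x \<in> D e)" using D_sub[of e] by auto
  qed
qed

lemma decomp:
  fixes h :: "'a \<Rightarrow> real"
  assumes h: "\<And>e. e < ne \<Longrightarrow> set_integrable lebesgue (D e) h"
  shows "set_integrable lebesgue \<Omega> h"
    and "(LINT x:\<Omega>|lebesgue. h x) = (\<Sum>e<ne. LINT x:D e|lebesgue. h x)"
proof -
  have eq: "(\<lambda>x. indicator \<Omega> x *\<^sub>R h x) = (\<lambda>x. \<Sum>e<ne. indicator (D e) x *\<^sub>R h x)"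
    by (simp add: ind_sum sum_distrib_right)
  show "set_integrable lebesgue \<Omega> h"
    unfolding set_integrable_def eq using h unfolding set_integrable_def
    by (intro Bochner_Integration.integrable_sum) auto
  show "(LINT x:\<Omega>|lebesgue. h x) = (\<Sum>e<ne. LINT x:D e|lebesgue. h x)"
    unfolding set_lebesgue_integral_def eq using h unfolding set_integrable_def
    by (intro Bochner_Integration.integral_sum) auto
qed

end


lemma inj_imp_invertible_mat_n:
  fixes G :: "nat \<Rightarrow> nat \<Rightarrow> real"
  assumes inj: "\<And>c. (\<forall>i<m. (\<Sum>j<m. G i j * c j) = 0) \<Longrightarrow> (\<forall>i<m. c i = 0)"
  shows "invertible_mat_n m G"
proof -
  define A where "A = mat m m (\<lambda>(i,j). G i j)"
  have A: "A \<in> carrier_mat m m" unfolding A_def by simp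
  have "Determinant.det A \<noteq> 0"
  proof
    assume "Determinant.det A = 0"
    then obtain v where v: "v \<in> carrier_vec m" "v \<noteq> 0\<^sub>v m" "A *\<^sub>v v = 0\<^sub>v m"
      using det_0_iff_vec_prod_zero_field[OF A] by blast
    have "\<forall>i<m. (\<Sum>j<m. G i j * v $ j) = 0"
    proof (intro allI impI)
      fix i assume i: "i < m"
      have "(A *\<^sub>v v) $ i = 0" using v(3) i by simp
      thus "(\<Sum>j<m. G i j * v $ j) = 0"
        using i v(1) by (simp add: A_def scalar_prod_def lessThan_atLeast0)
    qed
    from inj[OF this] have "v = 0\<^sub>v m" using v(1) by (intro eq_vecI) auto
    with v(2) show False by simp
  qed
  from det_non_zero_imp_unit[OF A this, of "()"]
  obtain B where B: "B \<in> carrier_mat m m" "B * A = 1\<^sub>m m" "A * B = 1\<^sub>m m"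
    unfolding Units_def ring_mat_def by auto
  define R where "R = (\<lambda>i j. B $$ (i,j))"
  have "is_inverse_mat m G R"
    unfolding is_inverse_mat_def
  proof (intro allI impI conjI)
    fix i j assume i: "i < m" and j: "j < m"
    have "(A * B) $$ (i,j) = (if i = j then 1 else 0)" using B(3) i j by simp
    thus "(\<Sum>k<m. G i k * R k j) = (if i = j then 1 else 0)"
      using i j B(1) by (simp add: A_def R_def scalar_prod_def lessThan_atLeast0)
    have "(B * A) $$ (i,j) = (if i = j then 1 else 0)" using B(2) i j by simp
    thus "(\<Sum>k<m. R i k * G k j) = (if i = j then 1 else 0)"
      using i j B(1) by (simp add: A_def R_def scalar_prod_def lessThan_atLeast0)
  qed
  thus ?thesis unfolding invertible_mat_n_def by blast
qed

lemma inv_mat_n_is_inverse: assumes "invertible_mat_n m M" shows "is_inverse_mat m M (inv_mat_n m M)"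
  using assms unfolding invertible_mat_n_def inv_mat_n_def by (rule someI_ex)

context dsetting begin

lemma BB_int: "e < ne \<Longrightarrow> i < nloc e \<Longrightarrow> j < nloc e \<Longrightarrow>
   set_integrable lebesgue (Om e) (\<lambda>x. Bern e i x * Bern e j x)"
  by (intro set_integrable_L2_mult Bern_meas Bern_L2)

lemma Bu_int: "e < ne \<Longrightarrow> i < nloc e \<Longrightarrow> set_borel_measurable lebesgue (Om e) u \<Longrightarrow>
   set_integrable lebesgue (Om e) (\<lambda>x. (u x)\<^sup>2) \<Longrightarrow>
   set_integrable lebesgue (Om e) (\<lambda>x. Bern e i x * u x)"
  by (intro set_integrable_L2_mult Bern_meas Bern_L2)

lemma comb_int:
  assumes e: "e < ne"
  shows "(LINT x:Om e|lebesgue. (\<Sum>j<nloc e. c j * Bern e j x) * (\<Sum>k<nloc e. d k * Bern e k x))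
       = (\<Sum>j<nloc e. \<Sum>k<nloc e. c j * d k * gram (Om e) (Bern e) j k)"
proof -
  have "(LINT x:Om e|lebesgue. (\<Sum>j<nloc e. c j * Bern e j x) * (\<Sum>k<nloc e. d k * Bern e k x))
      = (LINT x:Om e|lebesgue. (\<Sum>j<nloc e. \<Sum>k<nloc e. c j * d k * (Bern e j x * Bern e k x)))"
    by (simp add: sum_product mult_ac)
  also have "\<dots> = (\<Sum>j<nloc e. LINT x:Om e|lebesgue. (\<Sum>k<nloc e. c j * d k * (Bern e j x * Bern e k x)))"
    using e by (intro set_integral_sum' set_integrable_sum' set_integrable_mult_right BB_int) auto
  also have "\<dots> = (\<Sum>j<nloc e. \<Sum>k<nloc e. LINT x:Om e|lebesgue. c j * d k * (Bern e j x * Bern e k x))"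
    using e by (intro sum.cong refl set_integral_sum' set_integrable_mult_right BB_int) auto
  also have "\<dots> = (\<Sum>j<nloc e. \<Sum>k<nloc e. c j * d k * gram (Om e) (Bern e) j k)"
    unfolding gram_def by simp
  finally show ?thesis .
qed

lemma gram_invertible:
  assumes e: "e < ne"
  shows "invertible_mat_n (nloc e) (gram (Om e) (Bern e))"
proof (rule inj_imp_invertible_mat_n)
  fix c assume h: "\<forall>i<nloc e. (\<Sum>j<nloc e. gram (Om e) (Bern e) i j * c j) = 0"
  define s where "s x = (\<Sum>j<nloc e. c j * Bern e j x)" for x
  have "(LINT x:Om e|lebesgue. s x * s x) = (\<Sum>j<nloc e. \<Sum>k<nloc e. c j * c k * gram (Om e) (Bern e) j k)"
    unfolding s_def by (rule comb_int[OF e])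
  also have "\<dots> = (\<Sum>j<nloc e. c j * (\<Sum>k<nloc e. gram (Om e) (Bern e) j k * c k))"
    by (simp add: sum_distrib_left mult_ac)
  also have "\<dots> = 0" using h by simp
  finally have i0: "integral\<^sup>L lebesgue (\<lambda>x. indicator (Om e) x * (s x * s x)) = 0"
    unfolding set_lebesgue_integral_def by simp
  have sint: "set_integrable lebesgue (Om e) (\<lambda>x. s x * s x)"
  proof -
    have "s x * s x = (\<Sum>j<nloc e. \<Sum>k<nloc e. c j * c k * (Bern e j x * Bern e k x))" for x
      unfolding s_def by (simp add: sum_product mult_ac)
    moreover have "set_integrable lebesgue (Om e) (\<lambda>x. \<Sum>j<nloc e. \<Sum>k<nloc e. c j * c k * (Bern e j x * Bern e k x))"
      using e by (intro set_integrable_sum' set_integrable_mult_right BB_int) auto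
    ultimately show ?thesis by simp
  qed
  hence "integrable lebesgue (\<lambda>x. indicator (Om e) x * (s x * s x))"
    unfolding set_integrable_def by simp
  from integral_nonneg_eq_0_iff_AE[OF this] i0
  have "AE x in lebesgue. indicator (Om e) x * (s x * s x) = 0" by (simp add: indicator_def)
  hence "AE x in lebesgue. x \<in> Om e \<longrightarrow> (\<Sum>i<nloc e. c i * Bern e i x) = 0"
    by (rule AE_mp) (auto simp: s_def indicator_def)
  from Bern_indep[OF e this] show "\<forall>i<nloc e. c i = 0" .
qed

end


context dsetting begin

lemma dual_local_expand:
  "dual_local m Ce Be S w a x = (\<Sum>j<m. (w a * (\<Sum>i<m. inv_mat_n m Ce i a * inv_mat_n m (gram S Be) i j)) * Be j x)"
proof -
  have "dual_local m Ce Be S w a x = (\<Sum>i<m. \<Sum>j<m. w a * (inv_mat_n m Ce i a * inv_mat_n m (gram S Be) i j) * Be j x)"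
    unfolding dual_local_def by (simp add: sum_distrib_left mult.assoc)
  also have "\<dots> = (\<Sum>j<m. \<Sum>i<m. w a * (inv_mat_n m Ce i a * inv_mat_n m (gram S Be) i j) * Be j x)"
    by (rule sum.swap)
  also have "\<dots> = (\<Sum>j<m. (w a * (\<Sum>i<m. inv_mat_n m Ce i a * inv_mat_n m (gram S Be) i j)) * Be j x)"
    by (simp add: sum_distrib_left sum_distrib_right)
  finally show ?thesis .
qed

lemma core:
  assumes e: "e < ne" and a: "a < nloc e"
  shows "(LINT x:Om e|lebesgue. dual_local (nloc e) (C e) (Bern e) (Om e) w a x *
            (\<Sum>k<nloc e. (\<Sum>b<nloc e. p b * C e b k) * Bern e k x)) = w a * p a"
proof -
  let ?m = "nloc e"
  let ?G = "gram (Om e) (Bern e)"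
  let ?Gi = "inv_mat_n ?m ?G"
  let ?R = "inv_mat_n ?m (C e)"
  define c where "c j = w a * (\<Sum>i<?m. ?R i a * ?Gi i j)" for j
  define d where "d k = (\<Sum>b<?m. p b * C e b k)" for k
  have GI: "is_inverse_mat ?m ?G ?Gi" by (rule inv_mat_n_is_inverse[OF gram_invertible[OF e]])
  have CI: "is_inverse_mat ?m (C e) ?R" by (rule inv_mat_n_is_inverse[OF C_inv[OF e]])
  have "(LINT x:Om e|lebesgue. dual_local ?m (C e) (Bern e) (Om e) w a x *
            (\<Sum>k<?m. (\<Sum>b<?m. p b * C e b k) * Bern e k x))
      = (LINT x:Om e|lebesgue. (\<Sum>j<?m. c j * Bern e j x) * (\<Sum>k<?m. d k * Bern e k x))"
    unfolding dual_local_expand c_def d_def ..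
  also have "\<dots> = (\<Sum>j<?m. \<Sum>k<?m. c j * d k * ?G j k)" by (rule comb_int[OF e])
  also have "\<dots> = (\<Sum>k<?m. \<Sum>j<?m. d k * (c j * ?G j k))"
    by (subst sum.swap) (simp only: mult_ac)
  also have "\<dots> = (\<Sum>k<?m. d k * (\<Sum>j<?m. c j * ?G j k))"
    by (simp only: sum_distrib_left)
  also have "\<dots> = (\<Sum>k<?m. d k * (w a * ?R k a))"
  proof (rule sum.cong[OF refl])
    fix k assume k: "k \<in> {..<?m}"
    have "(\<Sum>j<?m. c j * ?G j k) = (\<Sum>j<?m. \<Sum>i<?m. w a * (?R i a * (?Gi i j * ?G j k)))"
      unfolding c_def by (simp add: sum_distrib_left sum_distrib_right mult_ac)
    also have "\<dots> = (\<Sum>i<?m. \<Sum>j<?m. w a * (?R i a * (?Gi i j * ?G j k)))"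
      by (rule sum.swap)
    also have "\<dots> = w a * (\<Sum>i<?m. ?R i a * (\<Sum>j<?m. ?Gi i j * ?G j k))"
      by (simp add: sum_distrib_left)
    also have "\<dots> = w a * (\<Sum>i<?m. ?R i a * (if i = k then 1 else 0))"
      using GI k unfolding is_inverse_mat_def by (intro arg_cong[where f="\<lambda>t. w a * t"] sum.cong) auto
    also have "\<dots> = w a * ?R k a" using k by (simp add: if_distrib cong: if_cong)
    finally show "d k * (\<Sum>j<?m. c j * ?G j k) = d k * (w a * ?R k a)" by simp
  qed
  also have "\<dots> = (\<Sum>k<?m. \<Sum>b<?m. w a * (p b * (C e b k * ?R k a)))"
    unfolding d_def by (simp add: sum_distrib_left sum_distrib_right mult_ac)
  also have "\<dots> = (\<Sum>b<?m. \<Sum>k<?m. w a * (p b * (C e b k * ?R k a)))"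
    by (rule sum.swap)
  also have "\<dots> = w a * (\<Sum>b<?m. p b * (\<Sum>k<?m. C e b k * ?R k a))"
    by (simp add: sum_distrib_left)
  also have "\<dots> = w a * (\<Sum>b<?m. p b * (if b = a then 1 else 0))"
    using CI a unfolding is_inverse_mat_def by (intro arg_cong[where f="\<lambda>t. w a * t"] sum.cong) auto
  also have "\<dots> = w a * p a" using a by (simp add: if_distrib cong: if_cong)
  finally show ?thesis .
qed

end


context dsetting begin

lemma N_inactive: "e < ne \<Longrightarrow> B < n \<Longrightarrow> B \<notin> loc e ` {..<nloc e} \<Longrightarrow> x \<in> Om e \<Longrightarrow> N B x = 0"
  using loc_active by blast

lemma uP_local:
  assumes e: "e < ne" and x: "x \<in> Om e"
  shows "(\<Sum>B<n. P B * N B x) = (\<Sum>k<nloc e. (\<Sum>b<nloc e. P (loc e b) * C e b k) * Bern e k x)"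
proof -
  have sub: "loc e ` {..<nloc e} \<subseteq> {..<n}" using loc_active[OF e] by auto
  have "(\<Sum>B<n. P B * N B x) = (\<Sum>B\<in>loc e ` {..<nloc e}. P B * N B x)"
    by (rule sum.mono_neutral_right) (use sub N_inactive[OF e _ _ x] in auto)
  also have "\<dots> = (\<Sum>b<nloc e. P (loc e b) * N (loc e b) x)"
    by (rule sum.reindex_cong[OF loc_inj[OF e] refl]) simp
  also have "\<dots> = (\<Sum>b<nloc e. P (loc e b) * (\<Sum>k<nloc e. C e b k * Bern e k x))"
    using extraction[OF e _ x] by simp
  also have "\<dots> = (\<Sum>b<nloc e. \<Sum>k<nloc e. P (loc e b) * C e b k * Bern e k x)"
    by (simp add: sum_distrib_left mult.assoc)
  also have "\<dots> = (\<Sum>k<nloc e. \<Sum>b<nloc e. P (loc e b) * C e b k * Bern e k x)"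
    by (rule sum.swap)
  also have "\<dots> = (\<Sum>k<nloc e. (\<Sum>b<nloc e. P (loc e b) * C e b k) * Bern e k x)"
    by (simp add: sum_distrib_right)
  finally show ?thesis .
qed

lemma g_int:
  assumes e: "e < ne" and u: "\<And>j. j < nloc e \<Longrightarrow> set_integrable lebesgue (Om e) (\<lambda>x. Bern e j x * u x)"
  shows "set_integrable lebesgue (Om e) (\<lambda>x. g A e x * u x)"
proof (cases "\<exists>a<nloc e. loc e a = A")
  case False
  hence "g A e = (\<lambda>x. 0)" by (auto simp: g_def fun_eq_iff)
  thus ?thesis by simp
next
  case True
  define a where "a = (THE a. a < nloc e \<and> loc e a = A)"
  define w where "w = (\<lambda>a. dual_weight N \<Omega> (Om e) (loc e a))"
  have eq: "g A e x * u x = (\<Sum>j<nloc e. (w a * (\<Sum>i<nloc e. inv_mat_n (nloc e) (C e) i a *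
        inv_mat_n (nloc e) (gram (Om e) (Bern e)) i j)) * (Bern e j x * u x))" for x
    unfolding g_def using True unfolding a_def[symmetric] w_def[symmetric] dual_local_expand
    by (simp add: sum_distrib_left sum_distrib_right mult_ac)
  show ?thesis unfolding eq using u by (intro set_integrable_sum' set_integrable_mult_right) auto
qed

lemma main_int:
  assumes u: "\<And>e j. e < ne \<Longrightarrow> j < nloc e \<Longrightarrow> set_integrable lebesgue (Om e) (\<lambda>x. Bern e j x * u x)"
  shows "set_integrable lebesgue \<Omega> (\<lambda>x. db A x * u x)"
    and "(LINT x:\<Omega>|lebesgue. db A x * u x) = (\<Sum>e<ne. LINT x:Om e|lebesgue. g A e x * u x)"
proof -
  have gi: "set_integrable lebesgue (Om e) (\<lambda>x. g A e x * u x)" if "e < ne" for e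
    using g_int[OF that u[OF that]] .
  have Di: "set_integrable lebesgue (D e) (\<lambda>x. db A x * u x)" if e: "e < ne" for e
    by (rule set_int_cong[OF set_integrable_subset[OF gi[OF e] D_meas[OF e] D_sub]])
       (simp add: db_D[OF e])
  show "set_integrable lebesgue \<Omega> (\<lambda>x. db A x * u x)" by (rule decomp(1)[OF Di])
  have "(LINT x:\<Omega>|lebesgue. db A x * u x) = (\<Sum>e<ne. LINT x:D e|lebesgue. db A x * u x)"
    by (rule decomp(2)[OF Di])
  also have "\<dots> = (\<Sum>e<ne. LINT x:Om e|lebesgue. g A e x * u x)"
  proof (rule sum.cong[OF refl])
    fix e assume "e \<in> {..<ne}" hence e: "e < ne" by simp
    have "(LINT x:D e|lebesgue. db A x * u x) = (LINT x:D e|lebesgue. g A e x * u x)"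
      by (rule set_lebesgue_integral_cong[OF D_meas[OF e]]) (simp add: db_D[OF e])
    also have "\<dots> = (LINT x:Om e|lebesgue. g A e x * u x)" by (rule int_D_Om[OF e gi[OF e]])
    finally show "(LINT x:D e|lebesgue. db A x * u x) = (LINT x:Om e|lebesgue. g A e x * u x)" .
  qed
  finally show "(LINT x:\<Omega>|lebesgue. db A x * u x) = (\<Sum>e<ne. LINT x:Om e|lebesgue. g A e x * u x)" .
qed

end


context dsetting begin

lemma NA_Om_int: "A < n \<Longrightarrow> e < ne \<Longrightarrow> set_integrable lebesgue (Om e) (N A)"
  by (rule set_integrable_subset[OF N_int elem_meas Om_sub])

lemma NA_sum:
  assumes A: "A < n"
  shows "(\<Sum>e<ne. LINT x:Om e|lebesgue. N A x) = (LINT x:\<Omega>|lebesgue. N A x)"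
proof -
  have Di: "set_integrable lebesgue (D e) (N A)" if e: "e < ne" for e
    by (rule set_integrable_subset[OF NA_Om_int[OF A e] D_meas[OF e] D_sub])
  have "(\<Sum>e<ne. LINT x:Om e|lebesgue. N A x) = (\<Sum>e<ne. LINT x:D e|lebesgue. N A x)"
    by (rule sum.cong[OF refl], rule int_D_Om[symmetric]) (auto intro: NA_Om_int[OF A])
  also have "\<dots> = (LINT x:\<Omega>|lebesgue. N A x)"
    by (rule decomp(2)[symmetric]) (rule Di)
  finally show ?thesis .
qed

lemma part1:
  assumes A: "A < n"
  shows "(LINT x:\<Omega>|lebesgue. db A x * (\<Sum>B<n. P B * N B x)) = P A"
proof -
  define u where "u x = (\<Sum>B<n. P B * N B x)" for x
  define I where "I = (LINT x:\<Omega>|lebesgue. N A x)"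
  have Ipos: "I > 0" unfolding I_def by (rule N_int_pos[OF A])
  have ui: "set_integrable lebesgue (Om e) (\<lambda>x. Bern e j x * u x)" if e: "e < ne" and j: "j < nloc e" for e j
  proof (rule set_int_cong)
    show "set_integrable lebesgue (Om e)
        (\<lambda>x. \<Sum>k<nloc e. (\<Sum>b<nloc e. P (loc e b) * C e b k) * (Bern e j x * Bern e k x))"
      using e j by (intro set_integrable_sum' set_integrable_mult_right BB_int) auto
    fix x assume x: "x \<in> Om e"
    show "(\<Sum>k<nloc e. (\<Sum>b<nloc e. P (loc e b) * C e b k) * (Bern e j x * Bern e k x)) = Bern e j x * u x"
      unfolding u_def uP_local[OF e x] by (simp add: sum_distrib_left mult_ac)
  qed
  have elem: "(LINT x:Om e|lebesgue. g A e x * u x) = P A * (LINT x:Om e|lebesgue. N A x) / I"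
    if e: "e < ne" for e
  proof (cases "\<exists>a<nloc e. loc e a = A")
    case True
    then obtain a where a: "a < nloc e" "loc e a = A" by blast
    have the: "(THE a. a < nloc e \<and> loc e a = A) = a"
      using a loc_inj[OF e] by (intro the_equality) (auto simp: inj_on_def)
    define w where "w = (\<lambda>a. dual_weight N \<Omega> (Om e) (loc e a))"
    have "(LINT x:Om e|lebesgue. g A e x * u x) =
      (LINT x:Om e|lebesgue. dual_local (nloc e) (C e) (Bern e) (Om e) w a x *
            (\<Sum>k<nloc e. (\<Sum>b<nloc e. P (loc e b) * C e b k) * Bern e k x))"
      by (rule set_lebesgue_integral_cong[OF elem_meas[OF e]])
         (use True in \<open>simp add: g_def the w_def u_def uP_local[OF e]\<close>)
    also have "\<dots> = w a * P (loc e a)" by (rule core[OF e a(1)])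
    also have "\<dots> = P A * (LINT x:Om e|lebesgue. N A x) / I"
      unfolding w_def dual_weight_def I_def a(2) by simp
    finally show ?thesis .
  next
    case False
    hence g0: "g A e = (\<lambda>x. 0)" by (auto simp: g_def fun_eq_iff)
    have "A \<notin> loc e ` {..<nloc e}" using False by auto
    hence "(LINT x:Om e|lebesgue. N A x) = (LINT x:Om e|lebesgue. 0)"
      by (intro set_lebesgue_integral_cong[OF elem_meas[OF e]]) (auto intro: N_inactive[OF e A])
    thus ?thesis using g0 by simp
  qed
  have "(LINT x:\<Omega>|lebesgue. db A x * u x) = (\<Sum>e<ne. LINT x:Om e|lebesgue. g A e x * u x)"
    by (rule main_int(2)) (rule ui)
  also have "\<dots> = (\<Sum>e<ne. P A * (LINT x:Om e|lebesgue. N A x) / I)"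
    by (rule sum.cong[OF refl]) (simp add: elem)
  also have "\<dots> = P A * (\<Sum>e<ne. LINT x:Om e|lebesgue. N A x) / I"
    by (simp add: sum_divide_distrib sum_distrib_left)
  also have "\<dots> = P A" unfolding NA_sum[OF A] I_def[symmetric] using Ipos by simp
  finally show ?thesis unfolding u_def .
qed

lemma L2_int:
  assumes um: "set_borel_measurable lebesgue \<Omega> u" and u2: "set_integrable lebesgue \<Omega> (\<lambda>x. (u x)\<^sup>2)"
  shows "set_integrable lebesgue \<Omega> (\<lambda>x. db A x * u x)"
proof (rule main_int(1))
  fix e j assume e: "e < ne" and j: "j < nloc e"
  show "set_integrable lebesgue (Om e) (\<lambda>x. Bern e j x * u x)"
    by (rule Bu_int[OF e j set_borel_measurable_subset[OF um elem_meas[OF e] Om_sub[OF e]]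
           set_integrable_subset[OF u2 elem_meas[OF e] Om_sub[OF e]]])
qed

lemma part3:
  assumes um: "set_borel_measurable lebesgue \<Omega> u" and u2: "set_integrable lebesgue \<Omega> (\<lambda>x. (u x)\<^sup>2)"
    and vm: "set_borel_measurable lebesgue \<Omega> v" and v2: "set_integrable lebesgue \<Omega> (\<lambda>x. (v x)\<^sup>2)"
  shows "dual_proj n db N \<Omega> (\<lambda>y. \<alpha> * u y + \<beta> * v y)
          = (\<lambda>x. \<alpha> * dual_proj n db N \<Omega> u x + \<beta> * dual_proj n db N \<Omega> v x)"
proof -
  have lin: "(LINT y:\<Omega>|lebesgue. db A y * (\<alpha> * u y + \<beta> * v y)) =
      \<alpha> * (LINT y:\<Omega>|lebesgue. db A y * u y) + \<beta> * (LINT y:\<Omega>|lebesgue. db A y * v y)" for A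
  proof -
    have iu: "set_integrable lebesgue \<Omega> (\<lambda>y. \<alpha> * (db A y * u y))"
      using L2_int[OF um u2] by simp
    have iv: "set_integrable lebesgue \<Omega> (\<lambda>y. \<beta> * (db A y * v y))"
      using L2_int[OF vm v2] by simp
    have "(LINT y:\<Omega>|lebesgue. db A y * (\<alpha> * u y + \<beta> * v y)) =
        (LINT y:\<Omega>|lebesgue. \<alpha> * (db A y * u y) + \<beta> * (db A y * v y))"
      by (simp add: algebra_simps)
    also have "\<dots> = (LINT y:\<Omega>|lebesgue. \<alpha> * (db A y * u y)) + (LINT y:\<Omega>|lebesgue. \<beta> * (db A y * v y))"
      by (rule set_integral_add(2)[OF iu iv])
    also have "\<dots> = \<alpha> * (LINT y:\<Omega>|lebesgue. db A y * u y) + \<beta> * (LINT y:\<Omega>|lebesgue. db A y * v y)"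
      by simp
    finally show ?thesis .
  qed
  show ?thesis
    unfolding dual_proj_def lin
    by (simp add: fun_eq_iff sum.distrib sum_distrib_left algebra_simps)
qed

end


theorem mainTheorem2:
  fixes \<Omega> :: "'a::euclidean_space set"
    and n :: nat                                  \<comment> \<open>number of global basis functions\<close>
    and N :: "nat \<Rightarrow> 'a \<Rightarrow> real"                  \<comment> \<open>global spline basis N_0..N_(n-1)\<close>
    and ne :: nat                                 \<comment> \<open>number of elements\<close>
    and Om :: "nat \<Rightarrow> 'a set"                     \<comment> \<open>elements Omega^e\<close>
    and nloc :: "nat \<Rightarrow> nat"                      \<comment> \<open>local number of functions on element e\<close>
    and loc :: "nat \<Rightarrow> nat \<Rightarrow> nat"                \<comment> \<open>local-to-global map A(e,a)\<close>
    and Bern :: "nat \<Rightarrow> nat \<Rightarrow> 'a \<Rightarrow> real"       \<comment> \<open>Bernstein functions B^e_i\<close>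
    and C :: "nat \<Rightarrow> nat \<Rightarrow> nat \<Rightarrow> real"         \<comment> \<open>extraction matrices C^e\<close>
  assumes partition: "\<Omega> = (\<Union>e<ne. Om e)"
    and elem_meas: "\<And>e. e < ne \<Longrightarrow> Om e \<in> sets lebesgue"
    and elem_pos: "\<And>e. e < ne \<Longrightarrow> emeasure lebesgue (Om e) > 0"
    and elem_disj: "\<And>e e'. e < ne \<Longrightarrow> e' < ne \<Longrightarrow> e \<noteq> e' \<Longrightarrow> Om e \<inter> Om e' \<in> null_sets lebesgue"
    and N_nonneg: "\<And>A x. A < n \<Longrightarrow> x \<in> \<Omega> \<Longrightarrow> N A x \<ge> 0"
    and N_int: "\<And>A. A < n \<Longrightarrow> set_integrable lebesgue \<Omega> (N A)"
    and N_int_pos: "\<And>A. A < n \<Longrightarrow> (LINT x:\<Omega>|lebesgue. N A x) > 0"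
    and loc_inj: "\<And>e. e < ne \<Longrightarrow> inj_on (loc e) {..<nloc e}"
    and loc_active: "\<And>e. e < ne \<Longrightarrow> loc e ` {..<nloc e} = {A. A < n \<and> (\<exists>x\<in>Om e. N A x \<noteq> 0)}"
    and Bern_meas: "\<And>e i. e < ne \<Longrightarrow> i < nloc e \<Longrightarrow> set_borel_measurable lebesgue (Om e) (Bern e i)"
    and Bern_L2: "\<And>e i. e < ne \<Longrightarrow> i < nloc e \<Longrightarrow> set_integrable lebesgue (Om e) (\<lambda>x. (Bern e i x)\<^sup>2)"
    and Bern_indep: "\<And>e c. e < ne \<Longrightarrow>
        (AE x in lebesgue. x \<in> Om e \<longrightarrow> (\<Sum>i<nloc e. c i * Bern e i x) = 0) \<Longrightarrow> (\<forall>i<nloc e. c i = 0)"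
    and C_inv: "\<And>e. e < ne \<Longrightarrow> invertible_mat_n (nloc e) (C e)"
    and extraction: "\<And>e a x. e < ne \<Longrightarrow> a < nloc e \<Longrightarrow> x \<in> Om e \<Longrightarrow>
        N (loc e a) x = (\<Sum>i<nloc e. C e a i * Bern e i x)"
  shows
    "(\<forall>P :: nat \<Rightarrow> real. \<forall>A<n.
        P A = (LINT x:\<Omega>|lebesgue. dual_basis ne Om nloc loc Bern C N \<Omega> A x * (\<Sum>B<n. P B * N B x)))
     \<and> (\<forall>P :: nat \<Rightarrow> real. \<forall>x\<in>\<Omega>.
        dual_proj n (dual_basis ne Om nloc loc Bern C N \<Omega>) N \<Omega> (\<lambda>y. \<Sum>B<n. P B * N B y) x
          = (\<Sum>B<n. P B * N B x))
     \<and> (\<forall>u v :: 'a \<Rightarrow> real. \<forall>\<alpha> \<beta> :: real.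
        set_borel_measurable lebesgue \<Omega> u \<longrightarrow> set_integrable lebesgue \<Omega> (\<lambda>x. (u x)\<^sup>2) \<longrightarrow>
        set_borel_measurable lebesgue \<Omega> v \<longrightarrow> set_integrable lebesgue \<Omega> (\<lambda>x. (v x)\<^sup>2) \<longrightarrow>
        dual_proj n (dual_basis ne Om nloc loc Bern C N \<Omega>) N \<Omega> (\<lambda>y. \<alpha> * u y + \<beta> * v y)
          = (\<lambda>x. \<alpha> * dual_proj n (dual_basis ne Om nloc loc Bern C N \<Omega>) N \<Omega> u x
                + \<beta> * dual_proj n (dual_basis ne Om nloc loc Bern C N \<Omega>) N \<Omega> v x))"
proof -
  interpret dsetting \<Omega> n N ne Om nloc loc Bern C
    by unfold_locales (fact partition elem_meas elem_disj N_int N_int_pos loc_inj loc_active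
        Bern_meas Bern_L2 Bern_indep C_inv extraction)+
  show ?thesis
  proof (intro conjI)
    show "\<forall>P :: nat \<Rightarrow> real. \<forall>A<n.
        P A = (LINT x:\<Omega>|lebesgue. dual_basis ne Om nloc loc Bern C N \<Omega> A x * (\<Sum>B<n. P B * N B x))"
      using part1 by simp
    show "\<forall>P :: nat \<Rightarrow> real. \<forall>x\<in>\<Omega>.
        dual_proj n (dual_basis ne Om nloc loc Bern C N \<Omega>) N \<Omega> (\<lambda>y. \<Sum>B<n. P B * N B y) x
          = (\<Sum>B<n. P B * N B x)"
      unfolding dual_proj_def using part1 by simp
    show "\<forall>u v :: 'a \<Rightarrow> real. \<forall>\<alpha> \<beta> :: real.
        set_borel_measurable lebesgue \<Omega> u \<longrightarrow> set_integrable lebesgue \<Omega> (\<lambda>x. (u x)\<^sup>2) \<longrightarrow>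
        set_borel_measurable lebesgue \<Omega> v \<longrightarrow> set_integrable lebesgue \<Omega> (\<lambda>x. (v x)\<^sup>2) \<longrightarrow>
        dual_proj n (dual_basis ne Om nloc loc Bern C N \<Omega>) N \<Omega> (\<lambda>y. \<alpha> * u y + \<beta> * v y)
          = (\<lambda>x. \<alpha> * dual_proj n (dual_basis ne Om nloc loc Bern C N \<Omega>) N \<Omega> u x
                + \<beta> * dual_proj n (dual_basis ne Om nloc loc Bern C N \<Omega>) N \<Omega> v x)"
      using part3 by blast
  qed
qed

end
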